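(* Let $F=\{\mathbb{R}^{n};f_{1},\dots,f_{m}\}$ be an IFS of contractive similitudes (consisting of at least two distinct maps), let $T\subset\mathbb{R}^{n}$ be closed, and let $c$ be a cost function as described in the context. Then for every $\mathbf{i}\in\Sigma^{\infty}$ and every $k\geq 0$, $\Pi_{T}(\mathbf{i}|k)$ and $\Pi_{T}(\mathbf{i})$ are well-defined collections of closed subsets of $\mathbb{R}^{n}$, and \[ \Pi_{T}(\mathbf{i}|0)\subset\Pi_{T}(\mathbf{i}|1)\subset\Pi_{T}(\mathbf{i}|2)\subset\cdots . \]
   Context: An IFS $F=\{\mathbb{R}^{n};f_{1},\dots,f_{m}\}$ is a finite collection of maps $f_{i}:\mathbb{R}^{n}\to\mathbb{R}^{n}$ with $|f_{i}(x)-f_{i}(y)|=\lambda_{i}|x-y|$, $\lambda_{i}\in(0,1)$. Let $\Sigma=\{1,\dots,m\}$, $\Sigma^{\infty}$ the set of infinite sequences $\mathbf{i}=i_{1}i_{2}\dots$ over $\Sigma$, and for $\mathbf{i}\in\Sigma^{\infty}$ write $\mathbf{i}|k=i_{1}\dots i_{k}$, $\mathbf{i}|0=\emptyset$. Write $f_{(\mathbf{j}|l)}=f_{j_{1}}\circ\cdots\circ f_{j_{l}}$ and $f_{-(\mathbf{i}|k)}=f_{i_{1}}^{-1}\circ\cdots\circ f_{i_{k}}^{-1}$ (identity for $k=0$). Assign costs $c_{i}>0$ to the maps $f_i$ and define $c(\mathbf{i}|k)=c_{i_{1}}+\cdots+c_{i_{k}}$, $c(\emptyset)=0$. Define \[ \Pi_{T}(\mathbf{i}|k)=f_{-(\mathbf{i}|k)}\big(\{f_{(\mathbf{j}|l)}(T):\mathbf{j}\in\Sigma^{\infty},\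 l\in\mathbb{N},\ c(\mathbf{j}|l-1)\leq c(\mathbf{i}|k)<c(\mathbf{j}|l)\}\big), \] with $\Pi_{T}(\emptyset)=\{f_{1}(T),\dots,f_{m}(T)\}$, and $\Pi_{T}(\mathbf{i})=\bigcup_{k\geq1}\Pi_{T}(\mathbf{i}|k)$. Here $\mathbb{N}=\{1,2,\dots\}$ and a map applied to a collection of sets is applied to each member. *)

theory Defs
  imports "HOL-Analysis.Analysis"
begin

text \<open>Alphabet Sigma = {1..m}. An infinite word i = i_1 i_2 ... is a function
  w :: nat => nat with i_{t+1} = w t (positions start at 0). The finite word i|k is
  represented by the pair (w, k).\<close>

definition seqs :: "nat \<Rightarrow> (nat \<Rightarrow> nat) set" where
  "seqs m = {w. \<forall>t. w t \<in> {1..m}}"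

definition word_cost :: "(nat \<Rightarrow> real) \<Rightarrow> (nat \<Rightarrow> nat) \<Rightarrow> nat \<Rightarrow> real" where
  "word_cost c w k = (\<Sum>t<k. c (w t))"

fun comp_word :: "(nat \<Rightarrow> 'a \<Rightarrow> 'a) \<Rightarrow> (nat \<Rightarrow> nat) \<Rightarrow> nat \<Rightarrow> 'a \<Rightarrow> 'a" where
  "comp_word f w 0 = id"
| "comp_word f w (Suc l) = comp_word f w l \<circ> f (w l)"

fun inv_comp_word :: "(nat \<Rightarrow> 'a \<Rightarrow> 'a) \<Rightarrow> (nat \<Rightarrow> nat) \<Rightarrow> nat \<Rightarrow> 'a \<Rightarrow> 'a" where
  "inv_comp_word f w 0 = id"
| "inv_comp_word f w (Suc k) = inv_comp_word f w k \<circ> inv (f (w k))"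

definition PiT :: "nat \<Rightarrow> (nat \<Rightarrow> 'a \<Rightarrow> 'a) \<Rightarrow> (nat \<Rightarrow> real) \<Rightarrow> 'a set
    \<Rightarrow> (nat \<Rightarrow> nat) \<Rightarrow> nat \<Rightarrow> 'a set set" where
  "PiT m f c T w k =
     (if k = 0 then (\<lambda>a. f a ` T) ` {1..m}
      else (\<lambda>S. inv_comp_word f w k ` S) `
        {comp_word f j l ` T | j l. j \<in> seqs m \<and> l \<ge> 1 \<and>
            word_cost c j (l - 1) \<le> word_cost c w k \<and> word_cost c w k < word_cost c j l})"

definition PiT_inf :: "nat \<Rightarrow> (nat \<Rightarrow> 'a \<Rightarrow> 'a) \<Rightarrow> (nat \<Rightarrow> real) \<Rightarrow> 'a set
    \<Rightarrow> (nat \<Rightarrow> nat) \<Rightarrow> 'a set set" where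
  "PiT_inf m f c T w = (\<Union>k\<in>{1..}. PiT m f c T w k)"

end

theory Submission
  imports Defs
begin

definition simil :: "('a::euclidean_space \<Rightarrow> 'a) \<Rightarrow> real \<Rightarrow> bool" where
  "simil h r \<longleftrightarrow> r > 0 \<and> (\<forall>x y. dist (h x) (h y) = r * dist x y)"

lemma iso_linear:
  fixes g :: "'a::euclidean_space \<Rightarrow> 'a"
  assumes d: "\<And>x y. dist (g x) (g y) = dist x y" and g0: "g 0 = 0"
  shows "linear g"
proof -
  have n: "norm (g x) = norm x" for x using d[of x 0] g0 by (simp add: dist_norm)
  have ip: "inner (g x) (g y) = inner x y" for x y
  proof -
    have "norm (g x - g y)^2 = norm (x - y)^2" using d[of x y] by (simp add: dist_norm)
    hence "inner (g x - g y) (g x - g y) = inner (x - y) (x - y)"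
      by (simp add: power2_norm_eq_inner)
    hence "inner (g x) (g x) + inner (g y) (g y) - 2 * inner (g x) (g y)
        = inner x x + inner y y - 2 * inner x y"
      by (simp add: inner_diff_left inner_diff_right inner_commute)
    moreover have "inner (g x) (g x) = inner x x" "inner (g y) (g y) = inner y y"
      using n[of x] n[of y] by (simp_all add: power2_norm_eq_inner[symmetric])
    ultimately show ?thesis by simp
  qed
  show ?thesis
  proof (rule linearI)
    fix x y
    let ?v = "g (x + y) - g x - g y"
    have "inner ?v ?v = inner (x + y - x - y) (x + y - x - y)"
      by (simp add: inner_diff_left inner_diff_right ip inner_commute inner_add_left inner_add_right)
    also have "\<dots> = 0" by simp
    finally have "?v = 0" by simp
    thus "g (x + y) = g x + g y" by (simp add: algebra_simps)
  next
    fix r :: real and x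
    let ?v = "g (r *\<^sub>R x) - r *\<^sub>R g x"
    have "inner ?v ?v = inner (r *\<^sub>R x - r *\<^sub>R x) (r *\<^sub>R x - r *\<^sub>R x)"
      by (simp add: inner_diff_left inner_diff_right ip inner_commute)
    also have "\<dots> = 0" by simp
    finally have "?v = 0" by simp
    thus "g (r *\<^sub>R x) = r *\<^sub>R g x" by (simp add: algebra_simps)
  qed
qed

lemma simil_decomp:
  fixes h :: "'a::euclidean_space \<Rightarrow> 'a"
  assumes "simil h r"
  shows "\<exists>g b. linear g \<and> inj g \<and> surj g \<and> (\<forall>x. h x = b + r *\<^sub>R g x)"
proof -
  define g where "g x = (1 / r) *\<^sub>R (h x - h 0)" for x
  have r: "r > 0" and d: "\<And>x y. dist (h x) (h y) = r * dist x y"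
    using assms by (auto simp: simil_def)
  have "dist (g x) (g y) = dist x y" for x y
  proof -
    have "dist (g x) (g y) = norm ((1/r) *\<^sub>R (h x - h y))"
      by (simp add: g_def dist_norm scaleR_diff_right[symmetric])
    also have "\<dots> = (1/r) * dist (h x) (h y)" using r by (simp add: dist_norm)
    also have "\<dots> = dist x y" using r d[of x y] by simp
    finally show ?thesis .
  qed
  moreover have "g 0 = 0" by (simp add: g_def)
  ultimately have lg: "linear g" by (rule iso_linear)
  have ig: "inj g"
  proof (rule injI)
    fix x y assume "g x = g y"
    hence "dist (g x) (g y) = 0" by simp
    with \<open>\<And>x y. dist (g x) (g y) = dist x y\<close> show "x = y" by simp
  qed
  have "surj g" using lg ig by (simp add: linear_injective_imp_surjective)
  moreover have "h x = h 0 + r *\<^sub>R g x" for x using r by (simp add: g_def)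
  ultimately show ?thesis using lg ig by blast
qed

lemma simil_bij: "simil h r \<Longrightarrow> bij h"
proof -
  assume "simil h r"
  obtain g b where g: "linear g" "inj g" "surj g" "\<And>x. h x = b + r *\<^sub>R g x"
    using simil_decomp[OF \<open>simil h r\<close>] by blast
  have r: "r > 0" using \<open>simil h r\<close> by (simp add: simil_def)
  show "bij h" unfolding bij_def
  proof
    show "inj h" using g(2) r by (auto simp: inj_def g(4))
    show "surj h"
    proof -
      { fix y
        obtain x where "g x = (1/r) *\<^sub>R (y - b)" using g(3) by (metis surjD)
        hence "h x = y" using r by (simp add: g(4))
        hence "y \<in> range h" by blast }
      thus ?thesis by blast
    qed
  qed
qed

lemma simil_closed: "simil h r \<Longrightarrow> closed S \<Longrightarrow> closed (h ` S)"
proof -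
  assume s: "simil h r" and S: "closed S"
  obtain g b where g: "linear g" "inj g" "surj g" "\<And>x. h x = b + r *\<^sub>R g x"
    using simil_decomp[OF \<open>simil h r\<close>] by blast
  have "closed (g ` S)" using closed_injective_linear_image S g(1,2) by blast
  hence "closed ((*\<^sub>R) r ` (g ` S))" by (rule closed_scaling)
  hence "closed ((+) b ` ((*\<^sub>R) r ` (g ` S)))" by (rule closed_translation)
  moreover have "h ` S = (+) b ` ((*\<^sub>R) r ` (g ` S))"
    by (auto simp: g(4) image_iff)
  ultimately show ?thesis by simp
qed

lemma simil_id: "simil id 1" by (simp add: simil_def)

lemma simil_comp: "simil h r \<Longrightarrow> simil k s \<Longrightarrow> simil (h \<circ> k) (r * s)"
  by (simp add: simil_def)

lemma simil_inv: "simil h r \<Longrightarrow> simil (inv h) (1 / r)"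
proof -
  assume s: "simil h r"
  hence b: "bij h" by (rule simil_bij)
  have r: "r > 0" and d: "\<And>x y. dist (h x) (h y) = r * dist x y"
    using s by (auto simp: simil_def)
  show ?thesis unfolding simil_def
  proof (intro conjI allI)
    show "0 < 1 / r" using r by simp
    fix x y
    have "dist x y = r * dist (inv h x) (inv h y)"
      using d[of "inv h x" "inv h y"] b by (simp add: bij_inv_eq_iff surj_f_inv_f bij_is_surj)
    thus "dist (inv h x) (inv h y) = 1 / r * dist x y" using r by (simp add: field_simps)
  qed
qed

lemma comp_word_simil:
  assumes "\<And>a. a \<in> {1..m} \<Longrightarrow> simil (f a) (lam a)" "j \<in> seqs m"
  shows "\<exists>r. simil (comp_word f j l) r"
proof (induction l)
  case 0 show ?case by (rule exI[of _ 1]) (simp add: simil_def)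
next
  case (Suc l)
  then obtain r where "simil (comp_word f j l) r" by blast
  moreover have "simil (f (j l)) (lam (j l))" using assms by (auto simp: seqs_def)
  ultimately have "simil (comp_word f j l \<circ> f (j l)) (r * lam (j l))" by (rule simil_comp)
  thus ?case unfolding comp_word.simps inv_comp_word.simps by blast
qed

lemma inv_comp_word_simil:
  assumes "\<And>a. a \<in> {1..m} \<Longrightarrow> simil (f a) (lam a)" "j \<in> seqs m"
  shows "\<exists>r. simil (inv_comp_word f j l) r"
proof (induction l)
  case 0 show ?case by (rule exI[of _ 1]) (simp add: simil_def)
next
  case (Suc l)
  then obtain r where "simil (inv_comp_word f j l) r" by blast
  moreover have "simil (inv (f (j l))) (1 / lam (j l))"
    using assms simil_inv by (auto simp: seqs_def)
  ultimately have "simil (inv_comp_word f j l \<circ> inv (f (j l))) (r * (1 / lam (j l)))" by (rule simil_comp)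
  thus ?case unfolding comp_word.simps inv_comp_word.simps by blast
qed

lemma comp_word_cons:
  "comp_word f (case_nat a j) (Suc l) = f a \<circ> comp_word f j l"
proof (induction l)
  case 0 show ?case by simp
next
  case (Suc l)
  have "comp_word f (case_nat a j) (Suc (Suc l)) = comp_word f (case_nat a j) (Suc l) \<circ> f (j l)"
    by simp
  also have "\<dots> = f a \<circ> comp_word f j l \<circ> f (j l)" unfolding Suc.IH ..
  finally show ?case by (simp add: comp_assoc)
qed

lemma word_cost_cons:
  "word_cost c (case_nat a j) (Suc l) = c a + word_cost c j l"
  unfolding word_cost_def by (simp only: sum.lessThan_Suc_shift nat.case)

theorem theorem2:
  fixes m :: nat and f :: "nat \<Rightarrow> 'a::euclidean_space \<Rightarrow> 'a"
    and lam :: "nat \<Rightarrow> real" and c :: "nat \<Rightarrow> real" and T :: "'a set"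
  assumes sim: "\<And>a x y. a \<in> {1..m} \<Longrightarrow> dist (f a x) (f a y) = lam a * dist x y"
    and lam: "\<And>a. a \<in> {1..m} \<Longrightarrow> 0 < lam a \<and> lam a < 1"
    and distinct: "\<exists>a\<in>{1..m}. \<exists>b\<in>{1..m}. f a \<noteq> f b"
    and cpos: "\<And>a. a \<in> {1..m} \<Longrightarrow> c a > 0"
    and T: "closed T"
  shows "(\<forall>a\<in>{1..m}. bij (f a))
    \<and> (\<forall>w\<in>seqs m. (\<forall>k. \<forall>S\<in>PiT m f c T w k. closed S)
        \<and> (\<forall>S\<in>PiT_inf m f c T w. closed S)
        \<and> (\<forall>k. PiT m f c T w k \<subseteq> PiT m f c T w (Suc k)))"
proof -
  have fs: "simil (f a) (lam a)" if "a \<in> {1..m}" for a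
    using sim lam that by (simp add: simil_def)
  have fb: "bij (f a)" if "a \<in> {1..m}" for a using fs[OF that] by (rule simil_bij)
  have cl: "\<forall>S\<in>PiT m f c T w k. closed S" if w: "w \<in> seqs m" for w k
  proof
    fix S assume S: "S \<in> PiT m f c T w k"
    show "closed S"
    proof (cases "k = 0")
      case True
      then obtain a where "a \<in> {1..m}" "S = f a ` T" using S by (auto simp: PiT_def)
      thus ?thesis using simil_closed[OF fs T] by simp
    next
      case False
      then obtain j l where j: "j \<in> seqs m" and
        Seq: "S = inv_comp_word f w k ` (comp_word f j l ` T)"
        using S by (auto simp: PiT_def)
      obtain r1 where r1: "simil (comp_word f j l) r1" using comp_word_simil[where f=f and lam=lam, OF fs j] by blast
      obtain r2 where r2: "simil (inv_comp_word f w k) r2"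
        using inv_comp_word_simil[where f=f and lam=lam, OF fs w] by blast
      show ?thesis unfolding Seq by (rule simil_closed[OF r2 simil_closed[OF r1 T]])
    qed
  qed
  have mono: "PiT m f c T w k \<subseteq> PiT m f c T w (Suc k)" if w: "w \<in> seqs m" for w k
  proof
    fix S assume S: "S \<in> PiT m f c T w k"
    have wk: "w k \<in> {1..m}" using w by (simp add: seqs_def)
    have invc: "inv (f (w k)) \<circ> f (w k) = id"
      using fb[OF wk] by (simp add: bij_is_inj)
    show "S \<in> PiT m f c T w (Suc k)"
    proof (cases "k = 0")
      case True
      then obtain a where a: "a \<in> {1..m}" and Sa: "S = f a ` T" using S by (auto simp: PiT_def)
      define j where "j = case_nat (w 0) (\<lambda>_. a)"
      have j: "j \<in> seqs m" using w a by (auto simp: seqs_def j_def split: nat.split)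
      have c1: "word_cost c j 1 = c (w 0)" "word_cost c w 1 = c (w 0)"
        by (simp_all add: word_cost_def j_def)
      have c2: "word_cost c j 2 = c (w 0) + c a"
        by (simp add: word_cost_def j_def numeral_2_eq_2)
      have eq: "inv_comp_word f w 1 ` (comp_word f j 2 ` T) = S"
      proof -
        have "inv_comp_word f w 1 \<circ> comp_word f j 2 = (inv (f (w 0)) \<circ> f (w 0)) \<circ> f a"
          by (simp add: j_def numeral_2_eq_2 comp_assoc)
        also have "\<dots> = f a" using invc True by simp
        finally have E: "inv_comp_word f w 1 \<circ> comp_word f j 2 = f a" .
        show ?thesis by (simp only: image_comp E Sa)
      qed
      have "comp_word f j 2 ` T \<in> {comp_word f j l ` T | j l. j \<in> seqs m \<and> l \<ge> 1 \<and>
            word_cost c j (l - 1) \<le> word_cost c w 1 \<and> word_cost c w 1 < word_cost c j l}"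
        unfolding mem_Collect_eq
        by (rule exI[of _ j], rule exI[of _ 2]) (use j c1 c2 cpos[OF a] in simp)
      hence "inv_comp_word f w 1 ` (comp_word f j 2 ` T) \<in> PiT m f c T w 1"
        unfolding PiT_def by simp
      thus ?thesis using eq True by simp
    next
      case False
      then obtain j l where j: "j \<in> seqs m" and l: "l \<ge> 1"
        and c1: "word_cost c j (l - 1) \<le> word_cost c w k"
        and c2: "word_cost c w k < word_cost c j l"
        and Seq: "S = inv_comp_word f w k ` (comp_word f j l ` T)"
        using S by (auto simp: PiT_def)
      define j' where "j' = case_nat (w k) j"
      have j': "j' \<in> seqs m" using w j by (auto simp: seqs_def j'_def split: nat.split)
      have wc: "word_cost c w (Suc k) = word_cost c w k + c (w k)"
        by (simp add: word_cost_def)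
      have c1': "word_cost c j' (Suc l - 1) \<le> word_cost c w (Suc k)"
        using c1 l wc word_cost_cons[of c "w k" j "l - 1"] by (simp add: j'_def)
      have c2': "word_cost c w (Suc k) < word_cost c j' (Suc l)"
        using c2 wc word_cost_cons[of c "w k" j l] by (simp add: j'_def)
      have eq: "inv_comp_word f w (Suc k) ` (comp_word f j' (Suc l) ` T) = S"
      proof -
        have "inv_comp_word f w (Suc k) \<circ> comp_word f j' (Suc l)
            = inv_comp_word f w k \<circ> (inv (f (w k)) \<circ> f (w k)) \<circ> comp_word f j l"
          by (simp only: j'_def comp_word_cons inv_comp_word.simps comp_assoc)
        also have "\<dots> = inv_comp_word f w k \<circ> comp_word f j l" using invc by simp
        finally have E: "inv_comp_word f w (Suc k) \<circ> comp_word f j' (Suc l) = inv_comp_word f w k \<circ> comp_word f j l" .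
        show ?thesis by (simp only: image_comp E Seq)
      qed
      have "comp_word f j' (Suc l) ` T \<in> {comp_word f j l ` T | j l. j \<in> seqs m \<and> l \<ge> 1 \<and>
            word_cost c j (l - 1) \<le> word_cost c w (Suc k) \<and> word_cost c w (Suc k) < word_cost c j l}"
        unfolding mem_Collect_eq
        by (rule exI[of _ j'], rule exI[of _ "Suc l"]) (use j' c1' c2' in simp)
      hence "inv_comp_word f w (Suc k) ` (comp_word f j' (Suc l) ` T) \<in> PiT m f c T w (Suc k)"
        unfolding PiT_def by simp
      thus ?thesis using eq by simp
    qed
  qed
  show ?thesis
    using fb cl mono by (auto simp: PiT_inf_def)
qed

end
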